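(* Let $b,c\in Z^{10}$ with $\sum_i b_i=\sum_i c_i=0$. Suppose there are distinct odd indices $i_1,i_2,i_3\in\{1,3,5,7,9\}$ such that $t\nmid B_{i_l}$ for $l=1,2,3$ and $t\mid B_i$ for the two remaining odd $i$, and distinct odd indices $j_1,j_2,j_3$ such that $t\nmid C_{j_l}$ for $l=1,2,3$ and $t\mid C_j$ for the two remaining odd $j$. Then $\mathbb{M}(b)\cong\mathbb{M}(c)$ as $B_{5,10}$-modules if and only if $\{i_1,i_2,i_3\}=\{j_1,j_2,j_3\}$.
   Context: Let $Z=\mathbb{C}[[t]]$. Let $\Gamma_{10}$ be the quiver with vertices $0,1,\dots,9$ (indices taken mod $10$) on a cycle and arrows $x_i\colon i-1\to i$, $y_i\colon i\to i-1$ for $i=1,\dots,10$. Let $B_{5,10}$ be the completed path algebra of $\Gamma_{10}$ modulo the closed ideal generated by $xy=yx$ and $x^5=y^5$ at every vertex. For $b=(b_1,\dots,b_{10})\in Z^{10}$ with $\sum_i b_i=0$, the $B_{5,10}$-module $\mathbb{M}(b)$ has $V_i=Z\oplus Z$ at every vertex, and for odd $j$: $x_j=\begin{pmatrix} t& b_j\\ 0&1\end{pmatrix}$, $y_j=\begin{pmatrix} 1&-b_j\\0&t\end{pmatrix}$; for even $j$: $x_j=\begin{pmatrix}1&b_j\\0&t\end{pmatrix}$, $y_j=\begin{pmatrix}t&-b_j\\0&1\end{pmatrix}$. An isomorphism $\mathbb{M}(b)\to\mathbb{M}(c)$ is a family of invertible $Z$-linear maps $\varphi_i\colon Z^2\to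 Z^2$ commuting with all $x_i$ and $y_i$. For odd $i$ write $B_i=b_i+b_{i+1}$ and $C_i=c_i+c_{i+1}$ (indices mod $10$). *)

theory Defs
  imports "HOL-Analysis.Analysis" "HOL-Computational_Algebra.Formal_Power_Series"
begin

text \<open>Z = C[[t]] is the type complex fps, t = fps_X. A Z-linear map Z^2 -> Z^2 is a
2x2 matrix over Z (acting on column vectors); composition is matrix product.\<close>

type_synonym Z = "complex fps"

definition mat2 :: "Z \<Rightarrow> Z \<Rightarrow> Z \<Rightarrow> Z \<Rightarrow> Z ^ 2 ^ 2" where
  "mat2 a b c d = (\<chi> i j. if i = 1 then (if j = 1 then a else b) else (if j = 1 then c else d))"

text \<open>Arrow x_j : vertex j-1 -> vertex j, y_j : vertex j -> vertex j-1 (j = 1..10, vertex 10 = 0)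
of the module M(b); b is indexed by 1..10.\<close>

definition xmat :: "(nat \<Rightarrow> Z) \<Rightarrow> nat \<Rightarrow> Z ^ 2 ^ 2" where
  "xmat b j = (if odd j then mat2 fps_X (b j) 0 1 else mat2 1 (b j) 0 fps_X)"

definition ymat :: "(nat \<Rightarrow> Z) \<Rightarrow> nat \<Rightarrow> Z ^ 2 ^ 2" where
  "ymat b j = (if odd j then mat2 1 (- b j) 0 fps_X else mat2 fps_X (- b j) 0 1)"

definition iso_M :: "(nat \<Rightarrow> Z) \<Rightarrow> (nat \<Rightarrow> Z) \<Rightarrow> bool" where
  "iso_M b c \<longleftrightarrow> (\<exists>\<phi> :: nat \<Rightarrow> Z ^ 2 ^ 2.
     (\<forall>i<10. invertible (\<phi> i)) \<and>
     (\<forall>j\<in>{1..10}. \<phi> (j mod 10) ** xmat b j = xmat c j ** \<phi> (j - 1) \<and>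
                    \<phi> (j - 1) ** ymat b j = ymat c j ** \<phi> (j mod 10)))"

text \<open>B_i = b_i + b_(i+1) for odd i (only odd i in 1..9 are used, so no wrap-around).\<close>

definition Bsum :: "(nat \<Rightarrow> Z) \<Rightarrow> nat \<Rightarrow> Z" where
  "Bsum b i = b i + b (i + 1)"

end

theory Submission
  imports Defs
begin

lemma mat2_nth: "mat2 a b c d $ 1 $ 1 = a" "mat2 a b c d $ 1 $ 2 = b"
  "mat2 a b c d $ 2 $ 1 = c" "mat2 a b c d $ 2 $ 2 = d"
  by (simp_all add: mat2_def)

lemma mat2_eta: "M = mat2 (M$1$1) (M$1$2) (M$2$1) (M$2$2)"
  unfolding mat2_def vec_eq_iff forall_2 by simp

lemma mat2_eq: "mat2 a b c d = mat2 a' b' c' d' \<longleftrightarrow> a = a' \<and> b = b' \<and> c = c' \<and> d = d'"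
  unfolding mat2_def vec_eq_iff forall_2 by simp

lemma mat2_mult: "mat2 a b c d ** mat2 e f g h = mat2 (a*e+b*g) (a*f+b*h) (c*e+d*g) (c*f+d*h)"
  unfolding mat2_def matrix_matrix_mult_def vec_eq_iff forall_2 sum_2 by simp

lemma mat2_one: "mat 1 = mat2 1 0 0 1"
  unfolding mat2_def mat_def vec_eq_iff forall_2 by simp

lemma invertible_mat2:
  fixes a b c d :: Z
  assumes "fps_nth (a*d - b*c) 0 \<noteq> 0"
  shows "invertible (mat2 a b c d)"
proof -
  define e where "e = inverse (a*d - b*c)"
  have e1: "(a*d - b*c) * e = 1" unfolding e_def using assms by (rule inverse_mult_eq_1')
  show ?thesis unfolding invertible_def
    apply (rule exI[of _ "mat2 (d*e) (-b*e) (-c*e) (a*e)"])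
    using e1 by (simp add: mat2_mult mat2_one mat2_eq algebra_simps)
qed

lemma invertible_mat2_D:
  fixes a b c d :: Z
  assumes "invertible (mat2 a b c d)"
  shows "fps_nth (a*d - b*c) 0 \<noteq> 0"
proof -
  obtain N where N: "mat2 a b c d ** N = mat 1" using assms unfolding invertible_def by blast
  have "mat2 a b c d ** mat2 (N$1$1) (N$1$2) (N$2$1) (N$2$2) = mat2 1 0 0 1"
    using N mat2_eta[of N] mat2_one by metis
  then have h: "a*N$1$1 + b*N$2$1 = 1" "a*N$1$2 + b*N$2$2 = 0" "c*N$1$1 + d*N$2$1 = 0" "c*N$1$2 + d*N$2$2 = 1"
    by (simp_all add: mat2_mult mat2_eq)
  have "(a*d - b*c) * (N$1$1*N$2$2 - N$1$2*N$2$1) = 1"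
    using h by algebra
  then have "fps_nth ((a*d - b*c) * (N$1$1*N$2$2 - N$1$2*N$2$1)) 0 = 1" by simp
  then show ?thesis by auto
qed

lemma X_dvd_iff: "fps_X dvd (f::Z) \<longleftrightarrow> fps_nth f 0 = 0"
proof
  assume "fps_X dvd f" then obtain g where "f = fps_X * g" by (auto elim: dvdE)
  then show "fps_nth f 0 = 0" by simp
next
  assume h: "fps_nth f 0 = 0"
  show "fps_X dvd f"
  proof (cases "f = 0")
    case False
    then have "1 \<le> subdegree f" using h by (metis less_one not_less subdegree_eq_0_iff)
    then have "fps_shift 1 f * fps_X = f" by (rule fps_shift_times_fps_X)
    then show ?thesis by (metis dvd_triv_right)
  qed simp
qed

lemma X_shift: "fps_nth (f::Z) 0 = 0 \<Longrightarrow> fps_X * fps_shift 1 f = f"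
  by (intro fps_ext) (simp add: fps_X_mult_nth)

lemma local_dir:
  fixes p q r s P Q R S p' q' r' s' b c b' c' :: Z
  assumes o: "mat2 P Q R S ** mat2 fps_X b 0 1 = mat2 fps_X c 0 1 ** mat2 p q r s"
    and e: "mat2 p' q' r' s' ** mat2 1 b' 0 fps_X = mat2 1 c' 0 fps_X ** mat2 P Q R S"
    and d: "fps_nth (p * s - q * r) 0 \<noteq> 0"
  shows "fps_nth (b+b') 0 = 0 \<longleftrightarrow> fps_nth (c+c') 0 = 0"
proof -
  from o have o1: "P * fps_X = fps_X * p + c * r" and o2: "P * b + Q = fps_X * q + c * s"
    and o3: "R * fps_X = r" and o4: "R * b + S = s"
    by (simp_all add: mat2_mult mat2_eq)
  note E = e[unfolded mat2_mult mat2_eq, simplified]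
  from E have e1: "p' = P + c' * R" and e2: "p' * b' + q' * fps_X = Q + c' * S" by blast+
  have "fps_X * (P - p - c * R) = 0" using o1 o3 by (simp add: algebra_simps flip: o3)
  then have "P - p - c * R = 0" by (metis mult_eq_0_iff fps_X_neq_zero)
  then have P: "P = p + c * R" by (simp add: algebra_simps)
  have r0: "fps_nth r 0 = 0" using o3 by (metis fps_X_mult_nth mult.commute)
  have ps: "fps_nth p 0 * fps_nth s 0 \<noteq> 0" using d r0 by simp
  have c2: "fps_nth o2' 0 = 0" if "o2' = P * b + Q - fps_X * q - c * s" for o2' using o2 that by simp
  have A: "fps_nth (P * b + Q) 0 = fps_nth (c * s) 0" using o2 by simp
  have B: "fps_nth (p' * b' + q' * fps_X) 0 = fps_nth (Q + c' * S) 0" using e2 by simp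
  have key: "fps_nth (c+c') 0 * fps_nth s 0 = fps_nth (b+b') 0 * fps_nth p 0 + fps_nth (b+b') 0 * fps_nth (c+c') 0 * fps_nth R 0"
    using A B e1 P o4[symmetric] by (simp add: algebra_simps)
  show ?thesis using key ps by auto
qed

definition cstr :: "(nat \<Rightarrow> complex) \<Rightarrow> (nat \<Rightarrow> complex) \<Rightarrow> complex \<Rightarrow> complex \<Rightarrow> complex \<Rightarrow> nat \<Rightarrow> bool" where
  "cstr \<beta> \<gamma> p s a k \<longleftrightarrow> \<gamma> k * (s - a * (\<Sum>m<k. \<beta> m)) - \<beta> k * (p + a * (\<Sum>m<k. \<gamma> m)) - a * \<beta> k * \<gamma> k = 0"

lemma cstr_prod:
  assumes "\<forall>k<n. cstr \<beta> \<gamma> p s a k"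
  shows "(p + a * (\<Sum>m<n. \<gamma> m)) * (s - a * (\<Sum>m<n. \<beta> m)) = p * s"
  using assms
proof (induction n)
  case 0 then show ?case by simp
next
  case (Suc n)
  then have IH: "(p + a * (\<Sum>m<n. \<gamma> m)) * (s - a * (\<Sum>m<n. \<beta> m)) = p * s"
    and c: "cstr \<beta> \<gamma> p s a n" by auto
  show ?case using IH c unfolding cstr_def by (simp add: algebra_simps)
qed

lemma five_cases: "(k::nat) < 5 \<Longrightarrow> k = 0 \<or> k = 1 \<or> k = 2 \<or> k = 3 \<or> k = 4" by auto

lemma sum_pat: "finite T \<Longrightarrow> S \<subseteq> T \<Longrightarrow> (\<forall>i\<in>T - S. f i = 0) \<Longrightarrow> sum f T = sum f S"
  by (rule sum.mono_neutral_right) auto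

lemma const_exists:
  fixes \<beta> \<gamma> :: "nat \<Rightarrow> complex"
  assumes k: "k1 < k2" "k2 < k3" "k3 < 5"
    and zb: "\<forall>k<5. (\<beta> k \<noteq> 0 \<longleftrightarrow> k \<in> {k1,k2,k3})"
    and zc: "\<forall>k<5. (\<gamma> k \<noteq> 0 \<longleftrightarrow> k \<in> {k1,k2,k3})"
    and sb: "(\<Sum>k<5. \<beta> k) = 0" and sc: "(\<Sum>k<5. \<gamma> k) = 0"
  shows "\<exists>p s a. p \<noteq> 0 \<and> s \<noteq> 0 \<and> (\<forall>k<5. cstr \<beta> \<gamma> p s a k)"
proof -
  have nz: "\<beta> k1 \<noteq> 0" "\<beta> k2 \<noteq> 0" "\<beta> k3 \<noteq> 0" "\<gamma> k1 \<noteq> 0" "\<gamma> k2 \<noteq> 0" "\<gamma> k3 \<noteq> 0"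
    using zb zc k by auto
  define p where "p = \<gamma> k1 * \<gamma> k3 * \<beta> k2"
  define s where "s = \<beta> k1 * \<beta> k3 * \<gamma> k2"
  define a where "a = \<gamma> k1 * \<beta> k2 - \<gamma> k2 * \<beta> k1"
  have z: "\<And>k. k < 5 \<Longrightarrow> k \<notin> {k1,k2,k3} \<Longrightarrow> \<beta> k = 0 \<and> \<gamma> k = 0" using zb zc by auto
  have gen: "(\<Sum>m<n. f m) = sum f ({k1,k2,k3} \<inter> {..<n})" if "n \<le> 5" "\<And>k. k < 5 \<Longrightarrow> k \<notin> {k1,k2,k3} \<Longrightarrow> f k = 0" for f :: "nat \<Rightarrow> complex" and n
  proof (rule sum_pat)
    show "\<forall>i\<in>{..<n} - {k1, k2, k3} \<inter> {..<n}. f i = 0"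
    proof
      fix i assume "i \<in> {..<n} - {k1, k2, k3} \<inter> {..<n}"
      then have "i < 5" "i \<notin> {k1,k2,k3}" using that(1) by auto
      then show "f i = 0" by (rule that(2))
    qed
  qed auto
  have S5: "\<beta> k1 + \<beta> k2 + \<beta> k3 = 0" "\<gamma> k1 + \<gamma> k2 + \<gamma> k3 = 0"
  proof -
    have i: "{k1,k2,k3} \<inter> {..<5} = {k1,k2,k3}" using k by auto
    show "\<beta> k1 + \<beta> k2 + \<beta> k3 = 0" using gen[of 5 \<beta>] z sb k by (simp add: i add.assoc)
    show "\<gamma> k1 + \<gamma> k2 + \<gamma> k3 = 0" using gen[of 5 \<gamma>] z sc k by (simp add: i add.assoc)
  qed
  have P1: "(\<Sum>m<k1. \<beta> m) = 0" "(\<Sum>m<k1. \<gamma> m) = 0"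
  proof -
    have i: "{k1,k2,k3} \<inter> {..<k1} = {}" using k by auto
    show "(\<Sum>m<k1. \<beta> m) = 0" using gen[of k1 \<beta>] z k by (simp add: i)
    show "(\<Sum>m<k1. \<gamma> m) = 0" using gen[of k1 \<gamma>] z k by (simp add: i)
  qed
  have P2: "(\<Sum>m<k2. \<beta> m) = \<beta> k1" "(\<Sum>m<k2. \<gamma> m) = \<gamma> k1"
  proof -
    have i: "{k1,k2,k3} \<inter> {..<k2} = {k1}" using k by auto
    show "(\<Sum>m<k2. \<beta> m) = \<beta> k1" using gen[of k2 \<beta>] z k by (simp add: i)
    show "(\<Sum>m<k2. \<gamma> m) = \<gamma> k1" using gen[of k2 \<gamma>] z k by (simp add: i)
  qed
  have P3: "(\<Sum>m<k3. \<beta> m) = \<beta> k1 + \<beta> k2" "(\<Sum>m<k3. \<gamma> m) = \<gamma> k1 + \<gamma> k2"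
  proof -
    have i: "{k1,k2,k3} \<inter> {..<k3} = {k1,k2}" using k by auto
    show "(\<Sum>m<k3. \<beta> m) = \<beta> k1 + \<beta> k2" using gen[of k3 \<beta>] z k by (simp add: i)
    show "(\<Sum>m<k3. \<gamma> m) = \<gamma> k1 + \<gamma> k2" using gen[of k3 \<gamma>] z k by (simp add: i)
  qed
  have "p \<noteq> 0" "s \<noteq> 0" using nz by (simp_all add: p_def s_def)
  moreover have "\<forall>k<5. cstr \<beta> \<gamma> p s a k"
  proof (intro allI impI)
    fix k :: nat assume "k < 5"
    consider "k \<notin> {k1,k2,k3}" | "k = k1" | "k = k2" | "k = k3" by blast
    then show "cstr \<beta> \<gamma> p s a k"
    proof cases
      case 1 then show ?thesis using z[OF \<open>k<5\<close>] by (simp add: cstr_def)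
    next
      case 2
      have "cstr \<beta> \<gamma> p s a k1" unfolding cstr_def P1 p_def s_def a_def using S5 by algebra
      then show ?thesis using 2 by simp
    next
      case 3
      have "cstr \<beta> \<gamma> p s a k2" unfolding cstr_def P2 p_def s_def a_def using S5 by algebra
      then show ?thesis using 3 by simp
    next
      case 4
      have "cstr \<beta> \<gamma> p s a k3" unfolding cstr_def P3 p_def s_def a_def using S5 by algebra
      then show ?thesis using 4 by simp
    qed
  qed
  ultimately show ?thesis by blast
qed

lemma eq_odd_x:
  fixes p q s A b c :: Z
  shows "mat2 (p + c * A) (fps_X * q + c * s - b * (p + c * A)) A (s - b * A) ** mat2 fps_X b 0 1
     = mat2 fps_X c 0 1 ** mat2 p q (A * fps_X) s"
  by (simp add: mat2_mult mat2_eq algebra_simps)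

lemma eq_odd_y:
  fixes p q s A b c :: Z
  shows "mat2 p q (A * fps_X) s ** mat2 1 (- b) 0 fps_X
     = mat2 1 (- c) 0 fps_X ** mat2 (p + c * A) (fps_X * q + c * s - b * (p + c * A)) A (s - b * A)"
  by (simp add: mat2_mult mat2_eq algebra_simps)

lemma eq_even_x:
  fixes p q s p' q' s' A b c b' c' :: Z
  assumes "p' = p + A * (c + c')" "s' = s - A * (b + b')"
    "fps_X * q' = fps_X * q + ((c + c') * s - (b + b') * p - A * (b + b') * (c + c'))"
  shows "mat2 p' q' (A * fps_X) s' ** mat2 1 b' 0 fps_X
     = mat2 1 c' 0 fps_X ** mat2 (p + c * A) (fps_X * q + c * s - b * (p + c * A)) A (s - b * A)"
  using assms unfolding mat2_mult mat2_eq by - (intro conjI, (simp add: algebra_simps | algebra)+)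

lemma eq_even_y:
  fixes p q s p' q' s' A b c b' c' :: Z
  assumes "p' = p + A * (c + c')" "s' = s - A * (b + b')"
    "fps_X * q' = fps_X * q + ((c + c') * s - (b + b') * p - A * (b + b') * (c + c'))"
  shows "mat2 (p + c * A) (fps_X * q + c * s - b * (p + c * A)) A (s - b * A) ** mat2 fps_X (- b') 0 1
     = mat2 fps_X (- c') 0 1 ** mat2 p' q' (A * fps_X) s'"
  using assms unfolding mat2_mult mat2_eq by - (intro conjI, (simp add: algebra_simps | algebra)+)

definition Bk :: "(nat \<Rightarrow> Z) \<Rightarrow> nat \<Rightarrow> Z" where "Bk b m = b (2*m+1) + b (2*m+2)"

definition pE :: "(nat \<Rightarrow> Z) \<Rightarrow> complex \<Rightarrow> complex \<Rightarrow> nat \<Rightarrow> Z" where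
  "pE c p a k = fps_const p + fps_const a * (\<Sum>m<k. Bk c m)"
definition sE :: "(nat \<Rightarrow> Z) \<Rightarrow> complex \<Rightarrow> complex \<Rightarrow> nat \<Rightarrow> Z" where
  "sE b s a k = fps_const s - fps_const a * (\<Sum>m<k. Bk b m)"
definition NE :: "(nat \<Rightarrow> Z) \<Rightarrow> (nat \<Rightarrow> Z) \<Rightarrow> complex \<Rightarrow> complex \<Rightarrow> complex \<Rightarrow> nat \<Rightarrow> Z" where
  "NE b c p s a m = Bk c m * sE b s a m - Bk b m * pE c p a m - fps_const a * Bk b m * Bk c m"
definition qE where "qE b c p s a k = (\<Sum>m<k. fps_shift 1 (NE b c p s a m))"

definition phiE where "phiE b c p s a k = mat2 (pE c p a k) (qE b c p s a k) (fps_const a * fps_X) (sE b s a k)"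
definition phiO where "phiO b c p s a k = (let P = pE c p a k; S = sE b s a k; Q = qE b c p s a k; A = fps_const a;
   bb = b (2*k+1); cc = c (2*k+1) in mat2 (P + cc * A) (fps_X * Q + cc * S - bb * (P + cc * A)) A (S - bb * A))"
definition phi where "phi b c p s a n = (if even n then phiE b c p s a (n div 2) else phiO b c p s a (n div 2))"

lemma NE_sum: "(\<Sum>m<k. NE b c p s a m) = fps_const s * (\<Sum>m<k. Bk c m) - fps_const p * (\<Sum>m<k. Bk b m)
   - fps_const a * (\<Sum>m<k. Bk b m) * (\<Sum>m<k. Bk c m)"
proof (induction k)
  case 0 then show ?case by simp
next
  case (Suc k)
  have "(\<Sum>m<Suc k. NE b c p s a m) = (\<Sum>m<k. NE b c p s a m) + NE b c p s a k" by simp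
  also have "\<dots> = fps_const s * (\<Sum>m<Suc k. Bk c m) - fps_const p * (\<Sum>m<Suc k. Bk b m)
   - fps_const a * (\<Sum>m<Suc k. Bk b m) * (\<Sum>m<Suc k. Bk c m)"
    unfolding Suc.IH by (unfold NE_def pE_def sE_def sum.lessThan_Suc, algebra)
  finally show ?case .
qed

lemma sum5: "(\<Sum>m<5. Bk c m) = (\<Sum>i=1..10. c i)"
  by (simp add: Bk_def eval_nat_numeral)

lemma construct:
  fixes b c :: "nat \<Rightarrow> Z" and p s a :: complex
  assumes sb: "(\<Sum>i=1..10. b i) = 0" and sc: "(\<Sum>i=1..10. c i) = 0"
    and cs: "\<forall>k<5. cstr (\<lambda>m. fps_nth (Bk b m) 0) (\<lambda>m. fps_nth (Bk c m) 0) p s a k"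
    and p0: "p \<noteq> 0" and s0: "s \<noteq> 0"
  shows "iso_M b c"
proof -
  define A where "A = fps_const a"
  have NE0: "fps_nth (NE b c p s a k) 0 = 0" if "k < 5" for k
    using cs that unfolding cstr_def NE_def pE_def sE_def by (simp add: fps_sum_nth)
  have XqE: "fps_X * qE b c p s a k = (\<Sum>m<k. NE b c p s a m)" if "k \<le> 5" for k
    unfolding qE_def sum_distrib_left
  proof (rule sum.cong[OF refl])
    fix m assume "m \<in> {..<k}"
    then have "m < 5" using that by auto
    then show "fps_X * fps_shift 1 (NE b c p s a m) = NE b c p s a m" by (intro X_shift NE0)
  qed
  have qstep: "fps_X * qE b c p s a (Suc k) = fps_X * qE b c p s a k + NE b c p s a k" if "k < 5" for k
    using XqE[of k] XqE[of "Suc k"] that by simp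
  have pstep: "pE c p a (Suc k) = pE c p a k + A * (c (2*k+1) + c (2*k+2))" for k
    by (simp add: pE_def Bk_def A_def algebra_simps)
  have sstep: "sE b s a (Suc k) = sE b s a k - A * (b (2*k+1) + b (2*k+2))" for k
    by (simp add: sE_def Bk_def A_def algebra_simps)
  have sumB: "(\<Sum>m<5. Bk b m) = 0" using sb sum5 by metis
  have sumC: "(\<Sum>m<5. Bk c m) = 0" using sc sum5 by metis
  have q5: "qE b c p s a 5 = 0"
  proof -
    have "fps_X * qE b c p s a 5 = 0" using XqE[of 5] NE_sum[where k=5 and b=b and c=c and p=p and s=s and a=a] sumB sumC by simp
    then show ?thesis by simp
  qed
  have phiE5: "phiE b c p s a 5 = phiE b c p s a 0"
    unfolding phiE_def using q5 sumB sumC by (simp add: pE_def sE_def qE_def)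
  have phiOk: "phi b c p s a (2*k+1) = phiO b c p s a k" for k
    unfolding phi_def by simp
  have phiEk: "phi b c p s a (2*k) = phiE b c p s a k" for k
    unfolding phi_def by simp
  have phiEm: "phi b c p s a ((2*k+2) mod 10) = phiE b c p s a (Suc k)" if "k < 5" for k
  proof (cases "k = 4")
    case True then show ?thesis using phiE5 by (simp add: phi_def)
  next
    case False
    then have "(2*k+2) mod 10 = 2 * Suc k" using that by simp
    then show ?thesis using phiEk[of "Suc k"] by (simp only:)
  qed
  have eqs: "phi b c p s a (j mod 10) ** xmat b j = xmat c j ** phi b c p s a (j - 1) \<and>
        phi b c p s a (j - 1) ** ymat b j = ymat c j ** phi b c p s a (j mod 10)" if j: "j \<in> {1..10}" for j
  proof (cases "odd j")
    case True
    then obtain k where k: "j = 2*k+1" by (metis oddE)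
    have "j < 10" using j k by simp presburger
    then have jm: "j mod 10 = 2*k+1" using k by simp
    have j1: "j - 1 = 2*k" using k by simp
    have xy: "xmat b j = mat2 fps_X (b (2*k+1)) 0 1" "xmat c j = mat2 fps_X (c (2*k+1)) 0 1"
      "ymat b j = mat2 1 (- b (2*k+1)) 0 fps_X" "ymat c j = mat2 1 (- c (2*k+1)) 0 fps_X"
      using True k by (simp_all add: xmat_def ymat_def)
    show ?thesis unfolding jm j1 xy phiOk phiEk unfolding phiO_def phiE_def Let_def A_def[symmetric]
      by (intro conjI eq_odd_x eq_odd_y)
  next
    case False
    then obtain m where m: "j = 2*m" by (auto elim: evenE)
    have m1: "m \<ge> 1" using j m by auto
    define k where "k = m - 1"
    have k: "j = 2*k+2" using m m1 k_def by simp
    have k5: "k < 5" using j k by auto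
    have jm: "j - 1 = 2*k+1" using k by simp
    have xy: "xmat b j = mat2 1 (b (2*k+2)) 0 fps_X" "xmat c j = mat2 1 (c (2*k+2)) 0 fps_X"
      "ymat b j = mat2 fps_X (- b (2*k+2)) 0 1" "ymat c j = mat2 fps_X (- c (2*k+2)) 0 1"
      using False k by (simp_all add: xmat_def ymat_def)
    have qf: "fps_X * qE b c p s a (Suc k) = fps_X * qE b c p s a k +
       ((c (2*k+1) + c (2*k+2)) * sE b s a k - (b (2*k+1) + b (2*k+2)) * pE c p a k
         - A * (b (2*k+1) + b (2*k+2)) * (c (2*k+1) + c (2*k+2)))"
      by (simp only: qstep[OF k5] NE_def Bk_def A_def)
    have jm2: "phi b c p s a (j mod 10) = phiE b c p s a (Suc k)" using phiEm[OF k5] k by simp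
    show ?thesis unfolding jm jm2 xy phiOk unfolding phiO_def phiE_def Let_def A_def[symmetric]
      by (intro conjI eq_even_x[OF pstep sstep qf] eq_even_y[OF pstep sstep qf])
  qed
  have inv: "invertible (phi b c p s a i)" if "i < 10" for i
  proof -
    define k where "k = i div 2"
    have k5: "k < 5" using that k_def by simp
    have prod: "fps_nth (pE c p a k) 0 * fps_nth (sE b s a k) 0 = p * s"
      using cstr_prod[of k "\<lambda>m. fps_nth (Bk b m) 0" "\<lambda>m. fps_nth (Bk c m) 0" p s a] cs k5
      by (simp add: pE_def sE_def fps_sum_nth)
    show ?thesis
    proof (cases "even i")
      case True
      then have "phi b c p s a i = phiE b c p s a k" unfolding phi_def k_def by simp
      then show ?thesis unfolding phiE_def
        by (simp only:) (rule invertible_mat2, simp add: prod p0 s0)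
    next
      case False
      let ?P = "pE c p a k" and ?S = "sE b s a k" and ?Q = "qE b c p s a k"
      have d: "(?P + c (2*k+1) * A) * (?S - b (2*k+1) * A) - (fps_X * ?Q + c (2*k+1) * ?S - b (2*k+1) * (?P + c (2*k+1) * A)) * A
         = ?P * ?S - fps_X * (?Q * A)" by algebra
      have "phi b c p s a i = phiO b c p s a k" using False unfolding phi_def k_def by simp
      then show ?thesis unfolding phiO_def Let_def A_def[symmetric]
        by (simp only:) (rule invertible_mat2, simp only: d, simp add: prod p0 s0)
    qed
  qed
  show ?thesis unfolding iso_M_def using eqs inv by blast
qed

lemma iso_local:
  assumes iso: "iso_M b c" and j: "j \<in> {1,3,5,7,9::nat}"
  shows "fps_nth (Bsum b j) 0 = 0 \<longleftrightarrow> fps_nth (Bsum c j) 0 = 0"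
proof -
  from iso obtain \<phi> where H: "(\<forall>i<10. invertible (\<phi> i)) \<and>
     (\<forall>j\<in>{1..10}. \<phi> (j mod 10) ** xmat b j = xmat c j ** \<phi> (j - 1) \<and>
                    \<phi> (j - 1) ** ymat b j = ymat c j ** \<phi> (j mod 10))"
    unfolding iso_M_def by (rule exE)
  note inv = conjunct1[OF H] and eq = conjunct2[OF H]
  have jo: "odd j" "j mod 10 = j" "j \<in> {1..10}" "j + 1 \<in> {1..10}" "j - 1 < 10" "(j + 1) - 1 = j"
    using j by auto
  have e1: "\<phi> j ** xmat b j = xmat c j ** \<phi> (j - 1)" using conjunct1[OF bspec[OF eq jo(3)]] jo(2) by simp
  have e2: "\<phi> ((j+1) mod 10) ** xmat b (j+1) = xmat c (j+1) ** \<phi> j" using conjunct1[OF bspec[OF eq jo(4)]] jo(6) by simp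
  have xs: "xmat b j = mat2 fps_X (b j) 0 1" "xmat c j = mat2 fps_X (c j) 0 1"
    "xmat b (j+1) = mat2 1 (b (j+1)) 0 fps_X" "xmat c (j+1) = mat2 1 (c (j+1)) 0 fps_X"
    using jo by (simp_all add: xmat_def)
  define M where "M = \<phi> (j - 1)"
  define N where "N = \<phi> j"
  define L where "L = \<phi> ((j+1) mod 10)"
  have invM: "invertible M" using inv jo M_def by auto
  have d: "fps_nth (M$1$1 * M$2$2 - M$1$2 * M$2$1) 0 \<noteq> 0"
    using invM mat2_eta[of M] by (metis invertible_mat2_D)
  have o: "mat2 (N$1$1) (N$1$2) (N$2$1) (N$2$2) ** mat2 fps_X (b j) 0 1 = mat2 fps_X (c j) 0 1 ** mat2 (M$1$1) (M$1$2) (M$2$1) (M$2$2)"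
    using e1 xs mat2_eta[of M] mat2_eta[of N] M_def N_def by metis
  have e: "mat2 (L$1$1) (L$1$2) (L$2$1) (L$2$2) ** mat2 1 (b (j+1)) 0 fps_X = mat2 1 (c (j+1)) 0 fps_X ** mat2 (N$1$1) (N$1$2) (N$2$1) (N$2$2)"
    using e2 xs mat2_eta[of L] mat2_eta[of N] L_def N_def by metis
  show ?thesis using local_dir[OF o e d] unfolding Bsum_def .
qed

lemma sort3:
  fixes x y z :: nat
  assumes "x \<noteq> y" "y \<noteq> z" "x \<noteq> z"
  shows "\<exists>u v w. u < v \<and> v < w \<and> {u,v,w} = {x,y,z}"
proof -
  have "x<y\<and>y<z \<or> x<z\<and>z<y \<or> y<x\<and>x<z \<or> y<z\<and>z<x \<or> z<x\<and>x<y \<or> z<y\<and>y<x" using assms by arith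
  then show ?thesis
  proof (elim disjE)
    assume "x<y\<and>y<z" then show ?thesis by (intro exI[of _ x] exI[of _ y] exI[of _ z]) auto
  next
    assume "x<z\<and>z<y" then show ?thesis by (intro exI[of _ x] exI[of _ z] exI[of _ y]) auto
  next
    assume "y<x\<and>x<z" then show ?thesis by (intro exI[of _ y] exI[of _ x] exI[of _ z]) auto
  next
    assume "y<z\<and>z<x" then show ?thesis by (intro exI[of _ y] exI[of _ z] exI[of _ x]) auto
  next
    assume "z<x\<and>x<y" then show ?thesis by (intro exI[of _ z] exI[of _ x] exI[of _ y]) auto
  next
    assume "z<y\<and>y<x" then show ?thesis by (intro exI[of _ z] exI[of _ y] exI[of _ x]) auto
  qed
qed

theorem theorem2p3:
  fixes b c :: "nat \<Rightarrow> Z" and i1 i2 i3 j1 j2 j3 :: nat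
  assumes "(\<Sum>i=1..10. b i) = 0" and "(\<Sum>i=1..10. c i) = 0"
    and "{i1, i2, i3} \<subseteq> {1, 3, 5, 7, 9}" and "distinct [i1, i2, i3]"
    and "\<forall>i\<in>{i1, i2, i3}. \<not> fps_X dvd Bsum b i"
    and "\<forall>i\<in>{1, 3, 5, 7, 9} - {i1, i2, i3}. fps_X dvd Bsum b i"
    and "{j1, j2, j3} \<subseteq> {1, 3, 5, 7, 9}" and "distinct [j1, j2, j3]"
    and "\<forall>j\<in>{j1, j2, j3}. \<not> fps_X dvd Bsum c j"
    and "\<forall>j\<in>{1, 3, 5, 7, 9} - {j1, j2, j3}. fps_X dvd Bsum c j"
  shows "iso_M b c \<longleftrightarrow> {i1, i2, i3} = {j1, j2, j3}"
proof -
  define O5 where "O5 = {1, 3, 5, 7, 9::nat}"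
  define I where "I = {i1, i2, i3}"
  define J where "J = {j1, j2, j3}"
  have charI: "\<forall>j\<in>O5. (fps_nth (Bsum b j) 0 \<noteq> 0 \<longleftrightarrow> j \<in> I)"
    using assms(3,5,6) unfolding O5_def I_def X_dvd_iff by blast
  have charJ: "\<forall>j\<in>O5. (fps_nth (Bsum c j) 0 \<noteq> 0 \<longleftrightarrow> j \<in> J)"
    using assms(7,9,10) unfolding O5_def J_def X_dvd_iff by blast
  have IO: "I \<subseteq> O5" "J \<subseteq> O5" using assms(3,7) unfolding O5_def I_def J_def by auto
  show ?thesis unfolding I_def[symmetric] J_def[symmetric]
  proof
    assume iso: "iso_M b c"
    have "\<forall>j\<in>O5. (fps_nth (Bsum b j) 0 = 0 \<longleftrightarrow> fps_nth (Bsum c j) 0 = 0)"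
      using iso_local[OF iso] unfolding O5_def by blast
    then show "I = J" using charI charJ IO by blast
  next
    assume IJ: "I = J"
    define h where "h = (\<lambda>i::nat. i div 2)"
    have hd: "h i1 \<noteq> h i2" "h i2 \<noteq> h i3" "h i1 \<noteq> h i3"
      using assms(3,4) unfolding h_def by auto
    obtain k1 k2 k3 where kk: "k1 < k2" "k2 < k3" "{k1,k2,k3} = {h i1, h i2, h i3}"
      using sort3[OF hd] by blast
    have hb: "\<forall>i\<in>{i1,i2,i3}. h i < 5" using assms(3) unfolding h_def by auto
    have "k3 \<in> {h i1, h i2, h i3}" using kk(3) by blast
    then have k35: "k3 < 5" using hb by auto
    have odd5: "2*k+1 \<in> O5" if "k < 5" for k using five_cases[OF that] unfolding O5_def by auto
    have memI: "2*k+1 \<in> I \<longleftrightarrow> k \<in> {k1,k2,k3}" if "k < 5" for k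
    proof -
      have "2*k+1 \<in> I \<longleftrightarrow> k \<in> h ` I"
      proof
        assume "2*k+1 \<in> I" then show "k \<in> h ` I" unfolding h_def by force
      next
        assume "k \<in> h ` I"
        then obtain i where i: "i \<in> I" "k = i div 2" unfolding h_def by blast
        then have "odd i" using IO unfolding O5_def by auto
        then have "i = 2*k+1" using i by presburger
        then show "2*k+1 \<in> I" using i by simp
      qed
      then show ?thesis using kk(3) unfolding I_def by simp
    qed
    have Bk_eq: "Bk b k = Bsum b (2*k+1)" "Bk c k = Bsum c (2*k+1)" for k
      by (simp_all add: Bk_def Bsum_def)
    have zb: "\<forall>k<5. (fps_nth (Bk b k) 0 \<noteq> 0 \<longleftrightarrow> k \<in> {k1,k2,k3})"
      using charI odd5 memI Bk_eq by auto
    have zc: "\<forall>k<5. (fps_nth (Bk c k) 0 \<noteq> 0 \<longleftrightarrow> k \<in> {k1,k2,k3})"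
      using charJ odd5 memI Bk_eq IJ by auto
    have sb: "(\<Sum>k<5. fps_nth (Bk b k) 0) = 0"
      using sum5[of b] assms(1) by (simp add: fps_sum_nth[symmetric])
    have sc: "(\<Sum>k<5. fps_nth (Bk c k) 0) = 0"
      using sum5[of c] assms(2) by (simp add: fps_sum_nth[symmetric])
    obtain p s a where pos: "p \<noteq> 0" "s \<noteq> 0"
      and cs: "\<forall>k<5. cstr (\<lambda>m. fps_nth (Bk b m) 0) (\<lambda>m. fps_nth (Bk c m) 0) p s a k"
      using const_exists[OF kk(1,2) k35, of "\<lambda>m. fps_nth (Bk b m) 0" "\<lambda>m. fps_nth (Bk c m) 0"] zb zc sb sc
      by blast
    show "iso_M b c" by (rule construct[OF assms(1,2) cs pos])
  qed
qed

end
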